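(* Let $(\Theta,d)$ be a totally bounded semimetric space. If $(X^\theta)_{\theta\in\Theta}$ is a nearly sub-Gaussian random field w.r.t. $d$, then there is some $\varepsilon>1$ such that $(X^\theta)_{\theta\in\Theta}$ is a sub-Gaussian random field w.r.t. $\overline d:=\varepsilon\cdot d$.
   Context: A centered stochastic process $(X^\theta)_{\theta\in\Theta}$ is a nearly sub-Gaussian random field w.r.t. a semimetric $d$ if there is $C\ge1$ such that $\mathbb E[\exp(\lambda(X^\theta-X^\vartheta))]\le C\exp(\lambda^2d(\theta,\vartheta)^2/2)$ for all $\theta,\vartheta\in\Theta$ and $\lambda>0$; it is a sub-Gaussian random field w.r.t. $d$ if this holds with $C=1$. *)

theory Defs
  imports "HOL-Probability.Probability"
begin

definition semimetric_on :: "'t set \<Rightarrow> ('t \<Rightarrow> 't \<Rightarrow> real) \<Rightarrow> bool" where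
  "semimetric_on \<Theta> d \<longleftrightarrow>
     (\<forall>x\<in>\<Theta>. \<forall>y\<in>\<Theta>. 0 \<le> d x y \<and> d x y = d y x) \<and>
     (\<forall>x\<in>\<Theta>. d x x = 0) \<and>
     (\<forall>x\<in>\<Theta>. \<forall>y\<in>\<Theta>. \<forall>z\<in>\<Theta>. d x z \<le> d x y + d y z)"

definition totally_bounded_wrt :: "'t set \<Rightarrow> ('t \<Rightarrow> 't \<Rightarrow> real) \<Rightarrow> bool" where
  "totally_bounded_wrt \<Theta> d \<longleftrightarrow>
     (\<forall>e>0. \<exists>F. finite F \<and> F \<subseteq> \<Theta> \<and> (\<forall>x\<in>\<Theta>. \<exists>y\<in>F. d x y < e))"

definition centered_process :: "'a measure \<Rightarrow> 't set \<Rightarrow> ('t \<Rightarrow> 'a \<Rightarrow> real) \<Rightarrow> bool" where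
  "centered_process M \<Theta> X \<longleftrightarrow>
     (\<forall>\<theta>\<in>\<Theta>. X \<theta> \<in> borel_measurable M \<and> integrable M (X \<theta>) \<and> integral\<^sup>L M (X \<theta>) = 0)"

definition nearly_subgaussian_rf ::
  "'a measure \<Rightarrow> 't set \<Rightarrow> ('t \<Rightarrow> 't \<Rightarrow> real) \<Rightarrow> ('t \<Rightarrow> 'a \<Rightarrow> real) \<Rightarrow> bool" where
  "nearly_subgaussian_rf M \<Theta> d X \<longleftrightarrow> centered_process M \<Theta> X \<and>
     (\<exists>C\<ge>1. \<forall>\<theta>\<in>\<Theta>. \<forall>\<eta>\<in>\<Theta>. \<forall>l::real. l > 0 \<longrightarrow>
        (\<integral>\<^sup>+\<omega>. ennreal (exp (l * (X \<theta> \<omega> - X \<eta> \<omega>))) \<partial>M)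
          \<le> ennreal (C * exp (l\<^sup>2 * (d \<theta> \<eta>)\<^sup>2 / 2)))"

definition subgaussian_rf ::
  "'a measure \<Rightarrow> 't set \<Rightarrow> ('t \<Rightarrow> 't \<Rightarrow> real) \<Rightarrow> ('t \<Rightarrow> 'a \<Rightarrow> real) \<Rightarrow> bool" where
  "subgaussian_rf M \<Theta> d X \<longleftrightarrow> centered_process M \<Theta> X \<and>
     (\<forall>\<theta>\<in>\<Theta>. \<forall>\<eta>\<in>\<Theta>. \<forall>l::real. l > 0 \<longrightarrow>
        (\<integral>\<^sup>+\<omega>. ennreal (exp (l * (X \<theta> \<omega> - X \<eta> \<omega>))) \<partial>M)
          \<le> ennreal (exp (l\<^sup>2 * (d \<theta> \<eta>)\<^sup>2 / 2)))"

end

theory Submission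
  imports Defs
begin

lemma sq_le_exp:
  fixes u :: real assumes "0 \<le> u" shows "u^2 \<le> 4 * exp u"
proof -
  have "1 + u/2 \<le> exp (u/2)" by (rule exp_ge_add_one_self)
  hence "(1 + u/2)^2 \<le> (exp (u/2))^2" using assms by (intro power_mono) auto
  also have "(exp (u/2))^2 = exp u" by (simp add: power2_eq_square flip: exp_add)
  finally have "(1 + u/2)^2 \<le> exp u" .
  moreover have "u^2 / 4 \<le> (1 + u/2)^2" using assms by (simp add: power2_eq_square field_simps)
  ultimately show ?thesis by simp
qed

lemma exp_taylor2:
  fixes x :: real shows "exp x \<le> 1 + x + x^2 / 2 * exp \<bar>x\<bar>"
proof -
  obtain t where t: "\<bar>t\<bar> \<le> \<bar>x\<bar>" "exp x = (\<Sum>m<2. x ^ m / fact m) + exp t / fact 2 * x ^ 2"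
    using Maclaurin_exp_le[of x 2] by blast
  have "exp t \<le> exp \<bar>x\<bar>" using t(1) by simp
  hence "exp t / 2 * x^2 \<le> exp \<bar>x\<bar> / 2 * x^2" by (intro mult_right_mono) auto
  moreover have "(\<Sum>m<2. x ^ m / fact m) = 1 + x" by (simp add: numeral_2_eq_2)
  ultimately have "exp x \<le> 1 + x + exp \<bar>x\<bar> / 2 * x^2" using t(2) by (simp add: numeral_2_eq_2)
  thus ?thesis by (simp add: mult.commute)
qed

lemma pointwise_bound:
  fixes y l \<delta> :: real
  assumes "0 < \<delta>" "0 < l" "l * \<delta> \<le> 1"
  shows "exp (l * y) \<le> 1 + l * y + (l * \<delta>)^2 * 2 * (exp (2 / \<delta> * y) + exp (2 / \<delta> * (- y)))"
proof -
  define u where "u = \<bar>y\<bar> / \<delta>"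
  define s where "s = l * \<delta>"
  have u0: "0 \<le> u" using assms by (simp add: u_def)
  have s0: "0 \<le> s" "s \<le> 1" using assms by (auto simp: s_def)
  have ly: "\<bar>l * y\<bar> = s * u" using assms by (simp add: u_def s_def abs_mult)
  have T1: "exp (l * y) \<le> 1 + l * y + (l*y)^2 / 2 * exp \<bar>l * y\<bar>" by (rule exp_taylor2)
  have e1: "(l*y)^2 = (s*u)^2" using ly by (metis power2_abs)
  have B1: "exp \<bar>l * y\<bar> \<le> exp u" using ly s0 u0 by (simp add: mult_left_le_one_le)
  have B2: "exp (2 * u) \<le> exp (2 / \<delta> * y) + exp (2 / \<delta> * (- y))"
  proof (cases "0 \<le> y")
    case True
    hence "2 * u = 2 / \<delta> * y" by (simp add: u_def)
    thus ?thesis by simp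
  next
    case False
    hence "2 * u = 2 / \<delta> * (- y)" by (simp add: u_def)
    thus ?thesis by simp
  qed
  have B3: "u^2 * exp u \<le> 4 * exp u * exp u"
    using sq_le_exp[OF u0] by (intro mult_right_mono) auto
  have "(l*y)^2 / 2 * exp \<bar>l * y\<bar> \<le> (s*u)^2 / 2 * exp u" unfolding e1 using B1 by (intro mult_left_mono) auto
  also have "\<dots> = s^2 * (u^2 * exp u) / 2" by (simp add: power_mult_distrib)
  also have "\<dots> \<le> s^2 * (4 * exp u * exp u) / 2" using B3 by (intro divide_right_mono mult_left_mono) auto
  also have "\<dots> = s^2 * 2 * exp (2 * u)" by (simp add: mult_exp_exp)
  also have "\<dots> \<le> s^2 * 2 * (exp (2 / \<delta> * y) + exp (2 / \<delta> * (- y)))" using B2 by (intro mult_left_mono) auto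
  finally have T2: "(l*y)^2 / 2 * exp \<bar>l * y\<bar> \<le> (l * \<delta>)^2 * 2 * (exp (2 / \<delta> * y) + exp (2 / \<delta> * (- y)))"
    by (simp add: s_def)
  show ?thesis using T1 T2 by linarith
qed

lemma nn_to_integral:
  fixes f :: "'a \<Rightarrow> real"
  assumes "f \<in> borel_measurable M" "\<And>x. 0 \<le> f x" "0 \<le> B"
    and "(\<integral>\<^sup>+x. ennreal (f x) \<partial>M) \<le> ennreal B"
  shows "integrable M f \<and> integral\<^sup>L M f \<le> B"
proof -
  have "(\<integral>\<^sup>+x. ennreal (norm (f x)) \<partial>M) < \<infinity>"
    using assms(2,4) by (simp add: order.strict_trans1)
  hence i: "integrable M f" by (intro integrableI_bounded assms(1))
  have "ennreal (integral\<^sup>L M f) \<le> ennreal B"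
    using nn_integral_eq_integral[OF i] assms by simp
  thus ?thesis using i assms(3) by (simp add: ennreal_le_iff)
qed

lemma AE_nonpos:
  fixes Y :: "'a \<Rightarrow> real"
  assumes P: "prob_space M" and Ym: "Y \<in> borel_measurable M"
    and H: "\<And>l. l > 0 \<Longrightarrow> (\<integral>\<^sup>+\<omega>. ennreal (exp (l * Y \<omega>)) \<partial>M) \<le> ennreal C"
  shows "AE \<omega> in M. Y \<omega> \<le> 0"
proof -
  interpret prob_space M by (rule P)
  define N where "N n = {x\<in>space M. Y x > 1 / Suc n}" for n :: nat
  have Ns: "N n \<in> sets M" for n unfolding N_def using Ym by measurable
  have N0: "N n \<in> null_sets M" for n
  proof -
    define a :: real where "a = 1 / Suc n"
    have a0: "a > 0" by (simp add: a_def)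
    define p where "p = measure M (N n)"
    have p0: "p \<ge> 0" by (simp add: p_def)
    have key: "p * (1 + l * a) \<le> max C 0" if l0: "l > 0" for l
    proof -
      have "ennreal (exp (l * a)) * emeasure M (N n) = (\<integral>\<^sup>+x. ennreal (exp (l * a)) * indicator (N n) x \<partial>M)"
        using Ns by (simp add: nn_integral_cmult_indicator)
      also have "\<dots> \<le> (\<integral>\<^sup>+\<omega>. ennreal (exp (l * Y \<omega>)) \<partial>M)"
      proof (intro nn_integral_mono)
        fix x assume "x \<in> space M"
        show "ennreal (exp (l * a)) * indicator (N n) x \<le> ennreal (exp (l * Y x))"
        proof (cases "x \<in> N n")
          case True
          hence "a < Y x" by (simp add: N_def a_def)
          hence "l * a \<le> l * Y x" using l0 by simp
          hence "exp (l * a) \<le> exp (l * Y x)" by simp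
          thus ?thesis using True by (simp add: ennreal_leI)
        next
          case False
          thus ?thesis by simp
        qed
      qed
      also have "\<dots> \<le> ennreal C" using H l0 .
      finally have "ennreal (exp (l * a)) * ennreal p \<le> ennreal C"
        by (simp add: p_def emeasure_eq_measure)
      hence "ennreal (exp (l * a) * p) \<le> ennreal C" by (simp add: ennreal_mult')
      hence "exp (l * a) * p \<le> max C 0"
      proof (cases "C \<ge> 0")
        case True
        thus "ennreal (exp (l * a) * p) \<le> ennreal C \<Longrightarrow> ?thesis" by (simp add: ennreal_le_iff)
      next
        case False
        hence C0: "ennreal C = 0" by (simp add: ennreal_eq_0_iff)
        assume "ennreal (exp (l * a) * p) \<le> ennreal C"
        also note C0
        finally have "ennreal (exp (l * a) * p) \<le> 0" .
        hence "exp (l * a) * p \<le> 0" by (simp add: ennreal_eq_0_iff)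
        thus ?thesis by (rule order_trans) (rule max.cobounded2)
      qed
      moreover have "(1 + l * a) * p \<le> exp (l * a) * p"
        using p0 by (intro mult_right_mono) (auto simp: exp_ge_add_one_self)
      ultimately have "(1 + l * a) * p \<le> max C 0" by (rule order_trans[rotated])
      thus ?thesis by (simp only: mult.commute)
    qed
    have "p = 0"
    proof (rule ccontr)
      assume "p \<noteq> 0"
      hence pp: "p > 0" using p0 by simp
      define C' where "C' = max C 0"
      have C0: "C' \<ge> 0" by (simp add: C'_def)
      define l where "l = (C' + 1) / (a * p)"
      have ap: "a * p > 0" using pp a0 by simp
      have l0: "l > 0" unfolding l_def using C0 ap by (intro divide_pos_pos) auto
      have apn: "a * p \<noteq> 0" using ap by linarith
      have la: "l * (a * p) = C' + 1" using nonzero_eq_divide_eq[OF apn, of l "C' + 1"] l_def by blast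
      have "p * (1 + l * a) = p + l * (a * p)" by (simp add: algebra_simps)
      hence "p * (1 + l * a) = p + (C' + 1)" using la by simp
      moreover have "p * (1 + l * a) \<le> C'" using key[OF l0] unfolding C'_def .
      ultimately show False using pp by linarith
    qed
    thus ?thesis using Ns by (simp add: p_def emeasure_eq_measure null_sets_def)
  qed
  have "(\<Union>n. N n) \<in> null_sets M" using N0 by (rule null_sets_UN)
  moreover have "{x\<in>space M. \<not> Y x \<le> 0} \<subseteq> (\<Union>n. N n)"
  proof
    fix x assume x: "x \<in> {x\<in>space M. \<not> Y x \<le> 0}"
    hence "Y x > 0" by simp
    then obtain n where "inverse (real (Suc n)) < Y x" using reals_Archimedean by blast
    hence "1 / real (Suc n) < Y x" by (simp add: inverse_eq_divide)
    thus "x \<in> (\<Union>n. N n)" using x by (auto simp: N_def)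
  qed
  ultimately show ?thesis by (rule AE_I')
qed

lemma real_large_case:
  fixes C s2 :: real assumes "1 \<le> C" "1 \<le> s2"
  shows "C * exp (s2 / 2) \<le> exp (100 * C^2 * s2 / 2)"
proof -
  have C2: "1 \<le> C^2" using assms by (simp add: one_le_power)
  have "C \<le> C * C" using assms by simp
  also have "\<dots> = C^2 * 1" by (simp add: power2_eq_square)
  also have "\<dots> \<le> C^2 * s2" using assms C2 by (intro mult_left_mono) auto
  finally have c1: "C \<le> C^2 * s2" .
  have "C \<le> 99 * C^2 * s2 / 2" using c1 C2 assms by simp
  also have "\<dots> \<le> exp (99 * C^2 * s2 / 2)" using exp_ge_add_one_self[of "99 * C^2 * s2 / 2"] by linarith
  finally have "C * exp (s2 / 2) \<le> exp (99 * C^2 * s2 / 2) * exp (s2 / 2)" by (intro mult_right_mono) auto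
  also have "\<dots> = exp (99 * C^2 * s2 / 2 + s2 / 2)" by (simp add: exp_add)
  also have "\<dots> \<le> exp (100 * C^2 * s2 / 2)"
  proof -
    have "s2 \<le> C^2 * s2" using C2 assms by (simp add: mult_le_cancel_right1)
    hence "99 * C^2 * s2 / 2 + s2 / 2 \<le> 100 * C^2 * s2 / 2" by (simp add: algebra_simps)
    thus ?thesis by simp
  qed
  finally show ?thesis .
qed

lemma real_small_case:
  fixes C s2 :: real assumes "1 \<le> C" "0 \<le> s2"
  shows "1 + s2 * 2 * (C * exp 2 + C * exp 2) \<le> exp (100 * C^2 * s2 / 2)"
proof -
  have e2: "exp (2::real) \<le> 9"
  proof -
    have "exp (2::real) = exp 1 * exp 1" by (simp flip: exp_add)
    also have "\<dots> \<le> 3 * 3" using exp_le by (intro mult_mono) auto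
    finally show ?thesis by simp
  qed
  have "C * exp 2 \<le> C * 9" using e2 assms by (intro mult_left_mono) auto
  also have "C * 9 \<le> C * (9 * C)" using assms by (intro mult_left_mono) auto
  finally have "C * exp 2 \<le> 9 * C^2" by (simp add: power2_eq_square)
  hence "s2 * 2 * (C * exp 2 + C * exp 2) \<le> s2 * 2 * (18 * C^2)" using assms by (intro mult_left_mono) auto
  also have "\<dots> \<le> 100 * C^2 * s2 / 2" using assms by simp
  finally have "1 + s2 * 2 * (C * exp 2 + C * exp 2) \<le> 1 + 100 * C^2 * s2 / 2" by simp
  also have "\<dots> \<le> exp (100 * C^2 * s2 / 2)" by (rule exp_ge_add_one_self)
  finally show ?thesis .
qed

theorem lemmaA1:
  fixes M :: "'a measure" and \<Theta> :: "'t set" and d :: "'t \<Rightarrow> 't \<Rightarrow> real"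
    and X :: "'t \<Rightarrow> 'a \<Rightarrow> real"
  assumes "prob_space M"
    and "semimetric_on \<Theta> d"
    and "totally_bounded_wrt \<Theta> d"
    and "nearly_subgaussian_rf M \<Theta> d X"
  shows "\<exists>\<epsilon>>1. subgaussian_rf M \<Theta> (\<lambda>\<theta> \<eta>. \<epsilon> * d \<theta> \<eta>) X"
proof -
  interpret prob_space M by (rule assms(1))
  have cp: "centered_process M \<Theta> X" using assms(4) by (simp add: nearly_subgaussian_rf_def)
  obtain C where C1: "C \<ge> 1" and HC: "\<And>\<theta> \<eta> l. \<theta>\<in>\<Theta> \<Longrightarrow> \<eta>\<in>\<Theta> \<Longrightarrow> l > 0 \<Longrightarrow>
        (\<integral>\<^sup>+\<omega>. ennreal (exp (l * (X \<theta> \<omega> - X \<eta> \<omega>))) \<partial>M)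
          \<le> ennreal (C * exp (l\<^sup>2 * (d \<theta> \<eta>)\<^sup>2 / 2))"
    using assms(4) unfolding nearly_subgaussian_rf_def by blast
  have Xm: "\<And>\<theta>. \<theta>\<in>\<Theta> \<Longrightarrow> X \<theta> \<in> borel_measurable M"
    and Xi: "\<And>\<theta>. \<theta>\<in>\<Theta> \<Longrightarrow> integrable M (X \<theta>)"
    and X0: "\<And>\<theta>. \<theta>\<in>\<Theta> \<Longrightarrow> integral\<^sup>L M (X \<theta>) = 0"
    using cp unfolding centered_process_def by auto
  have dsym: "\<And>x y. x\<in>\<Theta> \<Longrightarrow> y\<in>\<Theta> \<Longrightarrow> d x y = d y x"
    and dnn: "\<And>x y. x\<in>\<Theta> \<Longrightarrow> y\<in>\<Theta> \<Longrightarrow> 0 \<le> d x y"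
    using assms(2) unfolding semimetric_on_def by auto
  define \<epsilon> where "\<epsilon> = 10 * C"
  have main: "(\<integral>\<^sup>+\<omega>. ennreal (exp (l * (X \<theta> \<omega> - X \<eta> \<omega>))) \<partial>M)
          \<le> ennreal (exp (l\<^sup>2 * (\<epsilon> * d \<theta> \<eta>)\<^sup>2 / 2))"
    if th: "\<theta>\<in>\<Theta>" and et: "\<eta>\<in>\<Theta>" and l0: "l > 0" for \<theta> \<eta> l
  proof -
    define \<delta> where "\<delta> = d \<theta> \<eta>"
    have [measurable]: "X \<theta> \<in> borel_measurable M" "X \<eta> \<in> borel_measurable M" using Xm th et by auto
    have rhs: "l\<^sup>2 * (\<epsilon> * d \<theta> \<eta>)\<^sup>2 / 2 = 100 * C^2 * (l * \<delta>)^2 / 2"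
      by (simp add: \<epsilon>_def \<delta>_def power_mult_distrib)
    show ?thesis
    proof (cases "\<delta> = 0")
      case True
      have A1: "AE \<omega> in M. X \<theta> \<omega> - X \<eta> \<omega> \<le> 0"
      proof (rule AE_nonpos[OF assms(1), where C = C])
        fix l' :: real assume "l' > 0"
        thus "(\<integral>\<^sup>+\<omega>. ennreal (exp (l' * (X \<theta> \<omega> - X \<eta> \<omega>))) \<partial>M) \<le> ennreal C"
          using HC[OF th et] True by (simp add: \<delta>_def)
      qed measurable
      have A2: "AE \<omega> in M. X \<eta> \<omega> - X \<theta> \<omega> \<le> 0"
      proof (rule AE_nonpos[OF assms(1), where C = C])
        fix l' :: real assume "l' > 0"
        thus "(\<integral>\<^sup>+\<omega>. ennreal (exp (l' * (X \<eta> \<omega> - X \<theta> \<omega>))) \<partial>M) \<le> ennreal C"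
          using HC[OF et th] True dsym[OF th et] by (simp add: \<delta>_def)
      qed measurable
      have "(\<integral>\<^sup>+\<omega>. ennreal (exp (l * (X \<theta> \<omega> - X \<eta> \<omega>))) \<partial>M) = (\<integral>\<^sup>+\<omega>. 1 \<partial>M)"
      proof (rule nn_integral_cong_AE)
        show "AE \<omega> in M. ennreal (exp (l * (X \<theta> \<omega> - X \<eta> \<omega>))) = 1"
          using A1 A2 by eventually_elim simp
      qed
      also have "\<dots> = 1" by (simp add: emeasure_space_1)
      finally show ?thesis using rhs True by simp
    next
      case False
      hence dpos: "\<delta> > 0" using dnn[OF th et] by (simp add: \<delta>_def)
      show ?thesis
      proof (cases "1 \<le> l * \<delta>")
        case True
        have "(\<integral>\<^sup>+\<omega>. ennreal (exp (l * (X \<theta> \<omega> - X \<eta> \<omega>))) \<partial>M) \<le> ennreal (C * exp ((l * \<delta>)\<^sup>2 / 2))"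
          using HC[OF th et l0] by (simp add: \<delta>_def power_mult_distrib)
        also have "\<dots> \<le> ennreal (exp (100 * C^2 * (l * \<delta>)^2 / 2))"
          using real_large_case[OF C1, of "(l * \<delta>)^2"] True
          by (intro ennreal_leI) (simp add: one_le_power)
        finally show ?thesis using rhs by simp
      next
        case False
        define s2 where "s2 = (l * \<delta>)^2"
        have s20: "0 \<le> s2" by (simp add: s2_def)
        define Y where "Y = (\<lambda>\<omega>. X \<theta> \<omega> - X \<eta> \<omega>)"
        have Ym[measurable]: "Y \<in> borel_measurable M" by (simp add: Y_def)
        have Yi: "integrable M Y" unfolding Y_def using Xi th et by auto
        have Y0: "integral\<^sup>L M Y = 0" unfolding Y_def using Xi X0 th et by simp
        define A where "A = (\<lambda>\<omega>. exp (2 / \<delta> * Y \<omega>))"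
        define B where "B = (\<lambda>\<omega>. exp (2 / \<delta> * (- Y \<omega>)))"
        define E where "E = (\<lambda>\<omega>. exp (l * Y \<omega>))"
        have e2: "(2 / \<delta>)\<^sup>2 * \<delta>\<^sup>2 / 2 = 2" using dpos by (simp add: power_divide)
        have IA: "integrable M A \<and> integral\<^sup>L M A \<le> C * exp 2"
        proof (rule nn_to_integral)
          show "A \<in> borel_measurable M" unfolding A_def by measurable
          show "(\<integral>\<^sup>+x. ennreal (A x) \<partial>M) \<le> ennreal (C * exp 2)"
            using HC[OF th et, of "2 / \<delta>"] dpos e2 by (simp add: A_def Y_def \<delta>_def)
        qed (use C1 in \<open>auto simp: A_def\<close>)
        have IB: "integrable M B \<and> integral\<^sup>L M B \<le> C * exp 2"
        proof (rule nn_to_integral)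
          show "B \<in> borel_measurable M" unfolding B_def by measurable
          have "\<And>\<omega>. - Y \<omega> = X \<eta> \<omega> - X \<theta> \<omega>" by (simp add: Y_def)
          thus "(\<integral>\<^sup>+x. ennreal (B x) \<partial>M) \<le> ennreal (C * exp 2)"
            using HC[OF et th, of "2 / \<delta>"] dpos e2 dsym[OF th et] by (simp add: B_def \<delta>_def)
        qed (use C1 in \<open>auto simp: B_def\<close>)
        have IE: "integrable M E"
        proof -
          have "integrable M E \<and> integral\<^sup>L M E \<le> C * exp (l\<^sup>2 * \<delta>\<^sup>2 / 2)"
          proof (rule nn_to_integral)
            show "E \<in> borel_measurable M" unfolding E_def by measurable
            show "(\<integral>\<^sup>+x. ennreal (E x) \<partial>M) \<le> ennreal (C * exp (l\<^sup>2 * \<delta>\<^sup>2 / 2))"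
              using HC[OF th et l0] by (simp add: E_def Y_def \<delta>_def)
          qed (use C1 in \<open>auto simp: E_def\<close>)
          thus ?thesis by simp
        qed
        have pw: "E \<omega> \<le> 1 + l * Y \<omega> + s2 * 2 * (A \<omega> + B \<omega>)" for \<omega>
          using pointwise_bound[OF dpos l0, of "Y \<omega>"] False by (simp add: E_def A_def B_def s2_def)
        have IR: "integrable M (\<lambda>\<omega>. 1 + l * Y \<omega> + s2 * 2 * (A \<omega> + B \<omega>))"
          using IA IB Yi by auto
        have "integral\<^sup>L M E \<le> integral\<^sup>L M (\<lambda>\<omega>. 1 + l * Y \<omega> + s2 * 2 * (A \<omega> + B \<omega>))"
          using IE IR pw by (intro integral_mono) auto
        also have "\<dots> = 1 + l * integral\<^sup>L M Y + s2 * 2 * (integral\<^sup>L M A + integral\<^sup>L M B)"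
          using IA IB Yi by (simp add: integral_add prob_space)
        also have "\<dots> \<le> 1 + s2 * 2 * (C * exp 2 + C * exp 2)"
        proof -
          have "integral\<^sup>L M A + integral\<^sup>L M B \<le> C * exp 2 + C * exp 2" using IA IB by linarith
          hence "s2 * 2 * (integral\<^sup>L M A + integral\<^sup>L M B) \<le> s2 * 2 * (C * exp 2 + C * exp 2)"
            using s20 by (intro mult_left_mono) auto
          thus ?thesis using Y0 by simp
        qed
        also have "\<dots> \<le> exp (100 * C^2 * s2 / 2)" by (rule real_small_case[OF C1 s20])
        finally have ile: "integral\<^sup>L M E \<le> exp (100 * C^2 * s2 / 2)" .
        have "(\<integral>\<^sup>+\<omega>. ennreal (exp (l * (X \<theta> \<omega> - X \<eta> \<omega>))) \<partial>M) = ennreal (integral\<^sup>L M E)"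
          using nn_integral_eq_integral[OF IE] by (simp add: E_def Y_def)
        also have "\<dots> \<le> ennreal (exp (100 * C^2 * s2 / 2))" using ile by (rule ennreal_leI)
        finally show ?thesis using rhs by (simp add: s2_def)
      qed
    qed
  qed
  have "\<epsilon> > 1" using C1 by (simp add: \<epsilon>_def)
  moreover have "subgaussian_rf M \<Theta> (\<lambda>\<theta> \<eta>. \<epsilon> * d \<theta> \<eta>) X"
    unfolding subgaussian_rf_def using cp main by blast
  ultimately show ?thesis by blast
qed

end
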